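(* Let $l\ge 1$ and $m\ge 1$ be integers and $E$ a real number. Define $\mathcal N := \sqrt{\sum_{k=-2^{l-1}+1}^{2^{l-1}} \left|\frac{\sin \frac{(k-E)\pi}{m}}{\frac{(k-E)\pi}{m}}\right|^{2m}}$ and $\delta := \sum_{\substack{k=-2^{l-1}+1,\dots,2^{l-1}\\ |k-E|>m}} \left|\frac{1}{\mathcal N}\left(\frac{\sin \frac{(k-E)\pi}{m}}{\frac{(k-E)\pi}{m}}\right)^m\right|^2 .$ Then $\delta = O(\exp(-m))$.
   Context: Here $\delta$ is the probability, in $m$-th B-spline boosted quantum phase estimation with $l$ ancilla qubits applied to an eigenstate with eigenphase $E$ (in units of the ancilla grid), of measuring an outcome $k$ outside the confidence interval $E\pm m$; the post-QPE ancilla amplitudes are $\frac{1}{\mathcal N}\left(\frac{\sin\frac{(k-E)\pi}{m}}{\frac{(k-E)\pi}{m}}\right)^m$ for $k\in\{-2^{l-1}+1,\dots,2^{l-1}\}$. *)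

theory Defs
  imports Complex_Main
begin

text \<open>sinc with its continuous value 1 at 0 (the removable singularity at k = E).\<close>
definition sinc :: "real \<Rightarrow> real" where
  "sinc x = (if x = 0 then 1 else sin x / x)"

definition grid :: "nat \<Rightarrow> int set" where
  "grid l = {-(2^(l-1)) + 1 .. 2^(l-1)}"

definition qpe_N :: "nat \<Rightarrow> nat \<Rightarrow> real \<Rightarrow> real" where
  "qpe_N l m E = sqrt (\<Sum>k\<in>grid l. \<bar>sinc ((of_int k - E) * pi / real m)\<bar> ^ (2*m))"

definition qpe_delta :: "nat \<Rightarrow> nat \<Rightarrow> real \<Rightarrow> real" where
  "qpe_delta l m E =
     (\<Sum>k\<in>{k\<in>grid l. \<bar>of_int k - E\<bar> > real m}.
        \<bar>(1 / qpe_N l m E) * (sinc ((of_int k - E) * pi / real m)) ^ m\<bar> ^ 2)"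

end

theory Submission
  imports Defs "HOL-Analysis.Analysis"
begin

lemma pi_gt3: "pi > 3"
proof (rule ccontr)
  assume "\<not> pi > 3"
  then have "sin (3::real) \<le> 0" using pi_ge_two by (intro sin_le_zero) auto
  moreover have "\<bar>sin 3 - (\<Sum>m<7. sin_coeff m * 3 ^ m)\<bar> \<le> inverse (fact 7) * \<bar>3::real\<bar> ^ 7"
    by (rule Maclaurin_sin_bound)
  moreover have "(\<Sum>m<7. sin_coeff m * (3::real) ^ m) = (\<Sum>m\<in>{0,1,2,3,4,5,6}. sin_coeff m * (3::real) ^ m)"
    by (rule sum.cong) auto
  moreover have "(\<Sum>m\<in>{0,1,2,3,4,5,6}. sin_coeff m * (3::real) ^ m) = 3 - 27/6 + 243/120"
    by (simp add: sin_coeff_def fact_numeral)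
  moreover have "inverse (fact 7) * \<bar>3::real\<bar> ^ 7 = 2187/5040"
    by (simp add: fact_numeral)
  ultimately show False by simp
qed


lemma term_bound:
  fixes d :: real and m :: nat
  assumes m: "m \<ge> 1" and d: "\<bar>d\<bar> > real m"
  shows "\<bar>sinc (d * pi / real m)\<bar> ^ (2*m) \<le> real m ^ 2 * (1/pi) ^ (2*m) / d^2"
proof -
  define x where "x = d * pi / real m"
  have mpos: "real m > 0" using m by simp
  have ax: "\<bar>x\<bar> = \<bar>d\<bar> * pi / real m" unfolding x_def using mpos by (simp add: abs_mult)
  have xgt: "\<bar>x\<bar> > pi"
  proof -
    have "\<bar>d\<bar> * pi > real m * pi" using d by simp
    then show ?thesis unfolding ax using mpos by (simp add: field_simps)
  qed
  have x0: "x \<noteq> 0" using xgt pi_gt_zero by auto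
  have s1: "\<bar>sinc x\<bar> \<le> 1 / \<bar>x\<bar>"
    using x0 by (simp add: sinc_def abs_divide divide_right_mono abs_sin_le_one)
  have "\<bar>sinc x\<bar> ^ (2*m) \<le> (1 / \<bar>x\<bar>) ^ (2*m)"
    using s1 by (intro power_mono) auto
  also have "(1 / \<bar>x\<bar>) ^ (2*m) = (1 / \<bar>x\<bar>) ^ (2*m-2) * (1/\<bar>x\<bar>)^2"
  proof -
    have "2*m = (2*m-2)+2" using m by simp
    then show ?thesis by (metis power_add)
  qed
  also have "\<dots> \<le> (1/pi) ^ (2*m-2) * (1/\<bar>x\<bar>)^2"
    using xgt pi_gt_zero by (intro mult_right_mono power_mono) (auto simp: frac_le)
  also have "(1/\<bar>x\<bar>)^2 = real m^2 / (pi^2 * d^2)"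
    unfolding ax using mpos by (simp add: field_simps power2_eq_square)
  also have "(1/pi) ^ (2*m-2) * (real m^2 / (pi^2 * d^2)) = real m ^ 2 * ((1/pi) ^ (2*m-2) * (1/pi)^2) / d^2"
    by (simp add: field_simps power2_eq_square)
  also have "(1/pi) ^ (2*m-2) * (1/pi)^2 = (1/pi) ^ (2*m)"
  proof -
    have "2*m = (2*m-2)+2" using m by simp
    then show ?thesis by (metis power_add)
  qed
  finally show ?thesis unfolding x_def .
qed

lemma pow3: "real m ^ 2 \<le> 3 ^ m"
proof (induction m)
  case 0 then show ?case by simp
next
  case (Suc n)
  show ?case
  proof (cases "n \<le> 1")
    case True then show ?thesis by (cases n) (auto simp: power2_eq_square)
  next
    case False
    have "real (Suc n)^2 = real n ^2 + 2 * real n + 1" by (simp add: power2_eq_square field_simps)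
    also have "\<dots> \<le> 3 * real n ^ 2"
    proof -
      have n2: "real n \<ge> 2" using False by simp
      have h: "real n * real n \<ge> 2 * real n" using n2 by (intro mult_right_mono) auto
      show ?thesis unfolding power2_eq_square using n2 h by linarith
    qed
    also have "\<dots> \<le> 3 * 3 ^ n" using Suc by simp
    finally show ?thesis by simp
  qed
qed

lemma exp_bound:
  fixes m :: nat
  shows "real m ^ 2 * (1/pi) ^ (2*m) \<le> exp (- real m)"
proof -
  have e: "exp (real m) \<le> 3 ^ m"
  proof -
    have "exp (real m) = exp 1 ^ m" by (simp add: exp_of_nat_mult[symmetric])
    also have "\<dots> \<le> 3 ^ m" using exp_le by (intro power_mono) auto
    finally show ?thesis .
  qed
  have p: "(9::real) ^ m \<le> pi ^ (2*m)"
  proof -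
    have "(3::real) * 3 \<le> pi * pi" using pi_gt3 by (intro mult_mono) auto
    then have "(9::real) \<le> pi^2" by (simp add: power2_eq_square)
    then have "(9::real)^m \<le> (pi^2)^m" by (intro power_mono) auto
    then show ?thesis by (simp add: power_mult)
  qed
  have "real m ^ 2 * exp (real m) \<le> 3^m * 3^m"
    using pow3[of m] e by (intro mult_mono) auto
  also have "\<dots> = (9::real)^m" by (simp flip: power_mult_distrib)
  also have "\<dots> \<le> pi ^ (2*m)" by (rule p)
  finally have "real m ^ 2 * exp (real m) \<le> pi ^ (2*m)" .
  then show ?thesis
    by (simp add: exp_minus power_one_over field_simps)
qed


lemma sinc_lower:
  fixes x :: real
  shows "sinc x \<ge> 1 - x^2/6"
proof (cases "x = 0")
  case True then show ?thesis by (simp add: sinc_def)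
next
  case False
  have s: "(\<Sum>m<3. sin_coeff m * x ^ m) = x"
    by (simp add: sin_coeff_def numeral_3_eq_3)
  have f3: "fact 3 = (6::real)" by (simp only: numeral_3_eq_3 fact_Suc fact_0)
  have i3: "inverse (fact 3) * \<bar>x\<bar>^3 = \<bar>x\<bar>^3 / (6::real)"
    unfolding f3 by simp
  have "\<bar>sin x - x\<bar> \<le> \<bar>x\<bar>^3 / 6"
    using Maclaurin_sin_bound[of x 3] unfolding s i3 .
  then have "\<bar>sin x - x\<bar> / \<bar>x\<bar> \<le> (\<bar>x\<bar>^3 / 6) / \<bar>x\<bar>"
    by (intro divide_right_mono) auto
  also have "(\<bar>x\<bar>^3 / 6) / \<bar>x\<bar> = x^2/6" using False
    by (simp add: power3_eq_cube power2_eq_square)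
  also have "\<bar>sin x - x\<bar> / \<bar>x\<bar> = \<bar>sin x / x - 1\<bar>"
  proof -
    have "(sin x - x) / x = sin x / x - 1" using False by (simp add: diff_divide_distrib)
    then show ?thesis by (metis abs_divide)
  qed
  finally have "\<bar>sin x / x - 1\<bar> \<le> x^2/6" .
  then have "sin x / x \<ge> 1 - x^2/6" by linarith
  then show ?thesis using False by (simp add: sinc_def)
qed

lemma denom_lower:
  fixes d :: real and m :: nat
  assumes m: "m \<ge> 1" and d: "\<bar>d\<bar> \<le> 1/2"
  shows "\<bar>sinc (d * pi / real m)\<bar> ^ (2*m) \<ge> 1/9"
proof -
  define x where "x = d * pi / real m"
  have mpos: "real m \<ge> 1" using m by simp
  have ax: "\<bar>x\<bar> = \<bar>d\<bar> * pi / real m" unfolding x_def using mpos by (simp add: abs_mult)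
  have "\<bar>d\<bar> * pi \<le> (1/2) * 4" using d pi_less_4 pi_gt_zero
    by (intro mult_mono) auto
  then have "\<bar>d\<bar> * pi \<le> 2" by simp
  then have xle: "\<bar>x\<bar> \<le> 2 / real m" unfolding ax using mpos by (simp add: divide_right_mono)
  have "x^2 = \<bar>x\<bar>^2" by simp
  also have "\<dots> \<le> (2 / real m)^2" using xle by (intro power_mono) auto
  finally have x2: "x^2 \<le> 4 / real m^2" by (simp add: power_divide)
  define y where "y = - 2 / (3 * real m^2)"
  have ym: "real m * y = - 2 / (3 * real m)" unfolding y_def using mpos by (simp add: power2_eq_square)
  have "2 / (3 * real m) \<le> 2/3" using mpos by (simp add: field_simps)
  then have my: "1 + real m * y \<ge> 1/3" using ym by simp
  have "real m^2 \<ge> 1" using mpos by (simp add: one_le_power)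
  then have "3 * real m^2 \<ge> 2" by linarith
  then have "2 / (3 * real m^2) \<le> 1" by (subst divide_le_eq_1) auto
  then have "y \<ge> -1" unfolding y_def by simp
  then have b: "(1 + y)^m \<ge> 1/3" using Bernoulli_inequality[of y m] my by simp
  have "sinc x \<ge> 1 + y" using sinc_lower[of x] x2 unfolding y_def by (simp add: field_simps)
  moreover have "1 + y \<ge> 0" using \<open>y \<ge> -1\<close> by simp
  ultimately have "\<bar>sinc x\<bar> ^ m \<ge> (1 + y) ^ m" by (intro power_mono) auto
  then have "\<bar>sinc x\<bar> ^ m \<ge> 1/3" using b by simp
  then have "(\<bar>sinc x\<bar> ^ m)^2 \<ge> (1/3)^2" by (intro power_mono) auto
  moreover have "\<bar>sinc x\<bar>^(2*m) = (\<bar>sinc x\<bar>^m)^2" by (metis power_mult mult.commute)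
  moreover have "(1/3::real)^2 = 1/9" by (simp add: power2_eq_square)
  ultimately have "\<bar>sinc x\<bar>^(2*m) \<ge> 1/9" by simp
  then show ?thesis unfolding x_def .
qed
lemma sq_help: "\<bar>a * b ^ m\<bar>^2 = a^2 * \<bar>b\<bar>^(2*m)" for a b :: real
proof -
  have "\<bar>a * b ^ m\<bar>^2 = a^2 * (b^m)^2" by (simp add: power_mult_distrib)
  also have "(b^m)^2 = \<bar>b\<bar>^(2*m)"
  proof -
    have "(b^m)^2 = (b^2)^m" by (metis power_mult mult.commute)
    also have "\<dots> = (\<bar>b\<bar>^2)^m" by simp
    also have "\<dots> = \<bar>b\<bar>^(2*m)" by (metis power_mult)
    finally show ?thesis .
  qed
  finally show ?thesis .
qed

lemma tail_sum:
  fixes S :: "int set" and e :: real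
  assumes fin: "finite S" and gt: "\<forall>k\<in>S. real_of_int k - e > 1"
  shows "(\<Sum>k\<in>S. 1 / (real_of_int k - e)^2) \<le> 4 * suminf (\<lambda>n::nat. inverse (real n ^ 2))"
proof -
  define f where "f k = nat (k - \<lfloor>e\<rfloor>)" for k
  have fk: "real (f k) \<ge> 2 \<and> real_of_int k - e \<ge> real (f k) / 2" if "k \<in> S" for k
  proof -
    have a: "real_of_int k - e > 1" using gt that by auto
    have "k - \<lfloor>e\<rfloor> \<ge> 2" using a by linarith
    moreover have "real_of_int k - e > real_of_int (k - \<lfloor>e\<rfloor>) - 1" by linarith
    ultimately show ?thesis unfolding f_def by simp
  qed
  have pos: "k - \<lfloor>e\<rfloor> \<ge> 2" if "k \<in> S" for k
  proof -
    have a: "real_of_int k - e > 1" using gt that by auto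
    then show ?thesis by linarith
  qed
  have inj: "inj_on f S"
  proof (rule inj_onI)
    fix a b assume ab: "a \<in> S" "b \<in> S" "f a = f b"
    then have "nat (a - \<lfloor>e\<rfloor>) = nat (b - \<lfloor>e\<rfloor>)" unfolding f_def by simp
    then show "a = b" using pos[OF ab(1)] pos[OF ab(2)] by (simp add: eq_nat_nat_iff)
  qed
  have pt: "1 / (real_of_int k - e)^2 \<le> 4 * inverse (real (f k) ^ 2)" if "k \<in> S" for k
  proof -
    have h: "real (f k) \<ge> 2" "real_of_int k - e \<ge> real (f k) / 2" using fk that by auto
    have "(real (f k) / 2)^2 \<le> (real_of_int k - e)^2"
      using h by (intro power_mono) auto
    then have "1 / (real_of_int k - e)^2 \<le> 1 / (real (f k) / 2)^2"
      using h by (intro divide_left_mono) auto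
    also have "\<dots> = 4 * inverse (real (f k) ^ 2)" by (simp add: field_simps power2_eq_square)
    finally show ?thesis .
  qed
  have "(\<Sum>k\<in>S. 1 / (real_of_int k - e)^2) \<le> (\<Sum>k\<in>S. 4 * inverse (real (f k) ^ 2))"
    using pt by (rule sum_mono)
  also have "\<dots> = 4 * (\<Sum>n\<in>f ` S. inverse (real n ^ 2))"
    by (simp add: sum_distrib_left sum.reindex[OF inj])
  also have "(\<Sum>n\<in>f ` S. inverse (real n ^ 2)) \<le> suminf (\<lambda>n::nat. inverse (real n ^ 2))"
    apply (rule sum_le_suminf)
    using inverse_power_summable[of 2, where 'a=real] fin by auto
  finally show ?thesis by simp
qed

theorem lemma2:
  shows "\<exists>C. \<forall>l m E. l \<ge> 1 \<longrightarrow> m \<ge> 1 \<longrightarrow>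
            -(2^(l-1)) + 1 \<le> E \<longrightarrow> E \<le> 2^(l-1) \<longrightarrow>
            qpe_delta l m E \<le> C * exp (- real m)"
proof -
  define K where "K = suminf (\<lambda>n::nat. inverse (real n ^ 2))"
  have K0: "K \<ge> 0" unfolding K_def
    using inverse_power_summable[of 2, where 'a=real] by (intro suminf_nonneg) auto
  show ?thesis
  proof (intro exI[of _ "72 * K"] allI impI)
    fix l m :: nat and E :: real
    assume l: "l \<ge> 1" and m: "m \<ge> 1" and lo: "-(2^(l-1)) + 1 \<le> E" and hi: "E \<le> 2^(l-1)"
    define s where "s k = sinc ((of_int k - E) * pi / real m)" for k :: int
    define D where "D = (\<Sum>k\<in>grid l. \<bar>s k\<bar> ^ (2*m))"
    define S where "S = {k\<in>grid l. \<bar>of_int k - E\<bar> > real m}"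
    have fing: "finite (grid l)" by (simp add: grid_def)
    define k0 where "k0 = \<lfloor>E + 1/2\<rfloor>"
    have k0g: "k0 \<in> grid l"
    proof -
      have "real_of_int (-(2^(l-1)) + 1) \<le> E + 1/2" using lo by simp
      then have a: "-(2^(l-1)) + 1 \<le> k0" unfolding k0_def by (simp only: le_floor_iff)
      have "E + 1/2 < real_of_int (2^(l-1)) + 1" using hi by simp
      then have b: "k0 \<le> 2^(l-1)" unfolding k0_def by (simp only: floor_le_iff)
      show ?thesis using a b by (simp add: grid_def)
    qed
    have k0E: "\<bar>of_int k0 - E\<bar> \<le> 1/2" unfolding k0_def by linarith
    have D1: "D \<ge> 1/9"
    proof -
      have "1/9 \<le> \<bar>s k0\<bar> ^ (2*m)" unfolding s_def using denom_lower[OF m k0E] .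
      also have "\<dots> \<le> D" unfolding D_def using fing k0g
        by (intro member_le_sum) auto
      finally show ?thesis .
    qed
    have Nsq: "(1 / qpe_N l m E)^2 = 1 / D"
      unfolding qpe_N_def D_def s_def using D1 unfolding D_def s_def
      by (simp add: power_divide)
    have delta: "qpe_delta l m E = (\<Sum>k\<in>S. \<bar>s k\<bar> ^ (2*m)) / D"
    proof -
      have "qpe_delta l m E = (\<Sum>k\<in>S. (1 / qpe_N l m E)^2 * \<bar>s k\<bar> ^ (2*m))"
        unfolding qpe_delta_def S_def s_def
        by (intro sum.cong refl) (rule sq_help)
      also have "\<dots> = (\<Sum>k\<in>S. \<bar>s k\<bar> ^ (2*m)) / D"
        unfolding Nsq by (simp add: sum_divide_distrib)
      finally show ?thesis .
    qed
    define A where "A = real m ^ 2 * (1/pi) ^ (2*m)"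
    have A0: "A \<ge> 0" unfolding A_def by simp
    have finS: "finite S" unfolding S_def using fing by simp
    have tb: "(\<Sum>k\<in>S. \<bar>s k\<bar> ^ (2*m)) \<le> (\<Sum>k\<in>S. A * (1 / (real_of_int k - E)^2))"
    proof (rule sum_mono)
      fix k assume "k \<in> S"
      then have "\<bar>of_int k - E\<bar> > real m" unfolding S_def by auto
      from term_bound[OF m this] show "\<bar>s k\<bar> ^ (2*m) \<le> A * (1 / (real_of_int k - E)^2)"
        unfolding s_def A_def by simp
    qed
    define Sp where "Sp = {k\<in>S. real_of_int k - E > real m}"
    define Sm where "Sm = {k\<in>S. E - real_of_int k > real m}"
    have SU: "S = Sp \<union> Sm" unfolding Sp_def Sm_def S_def by auto
    have SD: "Sp \<inter> Sm = {}" unfolding Sp_def Sm_def by auto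
    have fSp: "finite Sp" "finite Sm" using finS unfolding Sp_def Sm_def by auto
    have Tp: "(\<Sum>k\<in>Sp. 1 / (real_of_int k - E)^2) \<le> 4 * K"
      unfolding K_def using m by (intro tail_sum fSp) (auto simp: Sp_def)
    have "(\<Sum>k\<in>Sm. 1 / (real_of_int k - E)^2) = (\<Sum>j\<in>uminus ` Sm. 1 / (real_of_int j - (-E))^2)"
      by (subst sum.reindex) (auto simp: inj_on_def power2_commute)
    also have "\<dots> \<le> 4 * K"
      unfolding K_def using m fSp by (intro tail_sum) (auto simp: Sm_def)
    finally have Tm: "(\<Sum>k\<in>Sm. 1 / (real_of_int k - E)^2) \<le> 4 * K" .
    have T: "(\<Sum>k\<in>S. 1 / (real_of_int k - E)^2) \<le> 8 * K"
      unfolding SU using Tp Tm fSp SD by (subst sum.union_disjoint) auto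
    have num: "(\<Sum>k\<in>S. \<bar>s k\<bar> ^ (2*m)) \<le> 8 * K * A"
    proof -
      have "(\<Sum>k\<in>S. \<bar>s k\<bar> ^ (2*m)) \<le> A * (\<Sum>k\<in>S. 1 / (real_of_int k - E)^2)"
        using tb by (simp add: sum_distrib_left)
      also have "\<dots> \<le> A * (8 * K)" using T A0 by (intro mult_left_mono) auto
      also have "A * (8 * K) = 8 * K * A" by (simp only: mult.commute)
      finally show ?thesis .
    qed
    have n0: "(\<Sum>k\<in>S. \<bar>s k\<bar> ^ (2*m)) \<ge> 0" by (intro sum_nonneg) auto
    have "qpe_delta l m E \<le> (\<Sum>k\<in>S. \<bar>s k\<bar> ^ (2*m)) * 9"
    proof -
      have "(\<Sum>k\<in>S. \<bar>s k\<bar> ^ (2*m)) / D \<le> (\<Sum>k\<in>S. \<bar>s k\<bar> ^ (2*m)) / (1/9)"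
        using D1 n0 by (intro divide_left_mono) auto
      then show ?thesis unfolding delta by simp
    qed
    also have "\<dots> \<le> 8 * K * A * 9" using num by (intro mult_right_mono) auto
    also have "8 * K * A * 9 = (72 * K) * A" by (simp only: mult_ac)
    also have "\<dots> \<le> (72 * K) * exp (- real m)"
      using exp_bound[of m] K0 unfolding A_def by (intro mult_left_mono) auto
    finally show "qpe_delta l m E \<le> 72 * K * exp (- real m)" .
  qed
qed

end
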